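(* Let $f := E_4^6\Delta + 2\Delta^3$. For every prime $\ell$, $$a_\ell(f) \equiv \begin{cases} 2 \pmod 4 & \text{if } \ell \equiv 1,3,5 \pmod 8,\\ 0 \pmod 4 & \text{if } \ell \equiv 2,7 \pmod 8.\end{cases}$$
   Context: $q = e^{2\pi i z}$. $E_4 = 1 + 240\sum_{n\ge1}\big(\sum_{d\mid n} d^3\big)q^n$, and $\Delta = \sum_{n\ge1}\tau(n)q^n$ is the unique normalized cusp form of weight $12$ on $\mathrm{SL}_2(\mathbb{Z})$. $a_n(h)$ denotes the coefficient of $q^n$ in the $q$-expansion of $h$. *)

theory Defs
  imports "HOL-Computational_Algebra.Formal_Power_Series" "HOL-Number_Theory.Cong"
begin

text \<open>q-expansions are modelled as formal power series in q = fps_X with integer coefficients.\<close>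

definition sigma3 :: "nat \<Rightarrow> int" where
  "sigma3 n = (\<Sum>d\<in>{d. d dvd n}. int d ^ 3)"

definition E4 :: "int fps" where
  "E4 = Abs_fps (\<lambda>n. if n = 0 then 1 else 240 * sigma3 n)"

text \<open>Delta = q prod_{k>=1} (1 - q^k)^24; the n-th coefficient only depends on the
  factors with k <= n, so we truncate the product at k = n.\<close>
definition Delta :: "int fps" where
  "Delta = Abs_fps (\<lambda>n. fps_nth (fps_X * (\<Prod>k\<in>{1..n}. (1 - fps_X ^ k) ^ 24)) n)"

definition f_form :: "int fps" where
  "f_form = E4 ^ 6 * Delta + 2 * Delta ^ 3"

end

theory Submission
  imports Defs "HOL-Number_Theory.Number_Theory" "HOL-Computational_Algebra.Polynomial"
begin

definition cg :: "int \<Rightarrow> nat \<Rightarrow> int fps \<Rightarrow> int fps \<Rightarrow> bool" where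
  "cg m N A B \<longleftrightarrow> (\<exists>C D. A = B + fps_const m * C + fps_X ^ N * D)"

lemma cg_refl[simp]: "cg m N A A"
  unfolding cg_def by (rule exI[of _ 0], rule exI[of _ 0]) simp

lemma cg_sym: "cg m N A B \<Longrightarrow> cg m N B A"
  unfolding cg_def
proof (elim exE)
  fix C D assume "A = B + fps_const m * C + fps_X ^ N * D"
  then show "\<exists>C D. B = A + fps_const m * C + fps_X ^ N * D"
    by (intro exI[of _ "- C"] exI[of _ "- D"]) simp
qed

lemma cg_trans: "cg m N A B \<Longrightarrow> cg m N B E \<Longrightarrow> cg m N A E"
  unfolding cg_def
proof (elim exE)
  fix C D C' D' assume "A = B + fps_const m * C + fps_X ^ N * D" "B = E + fps_const m * C' + fps_X ^ N * D'"
  then show "\<exists>C D. A = E + fps_const m * C + fps_X ^ N * D"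
    by (intro exI[of _ "C + C'"] exI[of _ "D + D'"]) (simp add: algebra_simps)
qed

lemma cg_add: "cg m N A B \<Longrightarrow> cg m N A' B' \<Longrightarrow> cg m N (A + A') (B + B')"
  unfolding cg_def
proof (elim exE)
  fix C D C' D' assume "A = B + fps_const m * C + fps_X ^ N * D" "A' = B' + fps_const m * C' + fps_X ^ N * D'"
  then show "\<exists>C D. A + A' = B + B' + fps_const m * C + fps_X ^ N * D"
    by (intro exI[of _ "C + C'"] exI[of _ "D + D'"]) (simp add: algebra_simps)
qed

lemma cg_mult: "cg m N A B \<Longrightarrow> cg m N A' B' \<Longrightarrow> cg m N (A * A') (B * B')"
  unfolding cg_def
proof (elim exE)
  fix C D C' D' assume h: "A = B + fps_const m * C + fps_X ^ N * D" "A' = B' + fps_const m * C' + fps_X ^ N * D'"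
  have "A * A' = B * B' + fps_const m * (B * C' + C * B' + fps_const m * C * C' + C * fps_X ^ N * D')
     + fps_X ^ N * (B * D' + D * B' + fps_const m * C' * D + fps_X ^ N * D * D')"
    unfolding h by (simp add: ring_distribs ac_simps)
  then show "\<exists>C D. A * A' = B * B' + fps_const m * C + fps_X ^ N * D" by blast
qed

lemma cg_power: "cg m N A B \<Longrightarrow> cg m N (A ^ k) (B ^ k)"
proof (induction k)
  case (Suc k)
  then show ?case unfolding power_Suc by (intro cg_mult)
qed simp

lemma cg_sum: "(\<And>i. i \<in> S \<Longrightarrow> cg m N (f i) (g i)) \<Longrightarrow> cg m N (sum f S) (sum g S)"
proof (induction S rule: infinite_finite_induct)
  case (insert x F)
  then show ?case by (simp add: cg_add)
qed simp_all

lemma cg_prod: "(\<And>i. i \<in> S \<Longrightarrow> cg m N (f i) (g i)) \<Longrightarrow> cg m N (prod f S) (prod g S)"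
proof (induction S rule: infinite_finite_induct)
  case (insert x F)
  then show ?case by (simp add: cg_mult)
qed simp_all

lemma cg_mono_N: "cg m N A B \<Longrightarrow> N' \<le> N \<Longrightarrow> cg m N' A B"
  unfolding cg_def
proof (elim exE)
  fix C D assume "A = B + fps_const m * C + fps_X ^ N * D" "N' \<le> N"
  then show "\<exists>C D. A = B + fps_const m * C + fps_X ^ N' * D"
    by (intro exI[of _ C] exI[of _ "fps_X ^ (N - N') * D"]) (simp add: mult.assoc[symmetric] power_add[symmetric])
qed

lemma cg_dvd_m: assumes "cg m N A B" "m' dvd m" shows "cg m' N A B"
proof -
  obtain C D where h: "A = B + fps_const m * C + fps_X ^ N * D" using assms(1) unfolding cg_def by blast
  obtain k where k: "m = m' * k" using assms(2) by blast
  have "fps_const m * C = fps_const m' * (fps_const k * C)"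
    by (simp add: k mult.assoc[symmetric])
  then have "A = B + fps_const m' * (fps_const k * C) + fps_X ^ N * D" using h by simp
  then show ?thesis unfolding cg_def by blast
qed

lemma cg_0_N: "cg m 0 A B"
  unfolding cg_def by (intro exI[of _ 0] exI[of _ "A - B"]) simp

lemma cg_scale2: "cg 2 N A B \<Longrightarrow> cg 4 N (2 * A) (2 * B)"
  unfolding cg_def
proof (elim exE)
  fix C D assume "A = B + fps_const 2 * C + fps_X ^ N * D"
  then show "\<exists>C D. 2 * A = 2 * B + fps_const 4 * C + fps_X ^ N * D"
    by (intro exI[of _ C] exI[of _ "2 * D"]) (simp add: algebra_simps fps_const_mult[symmetric] numeral_fps_const)
qed

lemma cg_nth: "cg m N A B \<Longrightarrow> i < N \<Longrightarrow> [fps_nth A i = fps_nth B i] (mod m)"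
  unfolding cg_def
proof (elim exE)
  fix C D assume "A = B + fps_const m * C + fps_X ^ N * D" "i < N"
  then have "fps_nth A i = fps_nth B i + m * fps_nth C i" by (simp add: fps_X_power_mult_nth)
  then show ?thesis by (simp add: cong_def)
qed

lemma cg_of_nth: assumes "\<And>i. i < N \<Longrightarrow> fps_nth A i = fps_nth B i" shows "cg m N A B"
proof -
  have "A - B = fps_X ^ N * fps_shift N (A - B)"
  proof (rule fps_ext)
    fix n show "fps_nth (A - B) n = fps_nth (fps_X ^ N * fps_shift N (A - B)) n"
      using assms by (auto simp: fps_X_power_mult_nth)
  qed
  then show ?thesis unfolding cg_def
    by (intro exI[of _ 0] exI[of _ "fps_shift N (A - B)"]) (simp add: algebra_simps)
qed

lemma cg_intmult: "cg m N (A + fps_const m * C) A"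
  unfolding cg_def by (intro exI[of _ C] exI[of _ 0]) simp


fun tm :: "nat \<Rightarrow> nat" where
  "tm 0 = 0" | "tm (Suc k) = tm k + k"

lemma tm_double: "tm k * 2 + k = k * k"
  by (induction k) (auto simp: algebra_simps)

lemma tm_add: "tm (a + b) = tm a + tm b + a * b"
  by (induction b) (auto simp: algebra_simps)

lemma tm_ge: "j \<le> tm (Suc j)"
  by (induction j) auto

definition qp :: "int fps \<Rightarrow> nat \<Rightarrow> int fps" where
  "qp q n = (\<Prod>i<n. 1 - q ^ Suc i)"

lemma qp_0[simp]: "qp q 0 = 1" by (simp add: qp_def)
lemma qp_Suc: "qp q (Suc n) = qp q n * (1 - q ^ Suc n)" by (simp add: qp_def)

fun qbin :: "int fps \<Rightarrow> nat \<Rightarrow> nat \<Rightarrow> int fps" where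
  "qbin q m 0 = 1"
| "qbin q 0 (Suc k) = 0"
| "qbin q (Suc m) (Suc k) = q ^ Suc k * qbin q m (Suc k) + qbin q m k"

lemma qbin_zero: "m < k \<Longrightarrow> qbin q m k = 0"
proof (induction m arbitrary: k)
  case 0 then show ?case by (cases k) auto
next
  case (Suc m) then show ?case by (cases k) auto
qed

lemma qbin_same: "qbin q m m = 1"
  by (induction m) (auto simp: qbin_zero)

lemma qbin_prod: "k \<le> m \<Longrightarrow> qbin q m k * qp q k * qp q (m - k) = qp q m"
proof (induction m arbitrary: k)
  case 0 then show ?case by simp
next
  case (Suc m)
  show ?case
  proof (cases k)
    case 0 then show ?thesis by simp
  next
    case (Suc k')
    show ?thesis
    proof (cases "k' = m")
      case True
      then show ?thesis using Suc by (simp add: qbin_zero qbin_same qp_Suc)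
    next
      case False
      then have lt: "Suc k' \<le> m" using Suc \<open>k \<le> Suc m\<close> by simp
      have ih1: "qbin q m (Suc k') * qp q (Suc k') * qp q (m - Suc k') = qp q m"
        using Suc.IH[OF lt] .
      have ih2: "qbin q m k' * qp q k' * qp q (m - k') = qp q m"
        using Suc.IH lt by simp
      have e: "m - k' = Suc (m - Suc k')" using lt by simp
      have "qbin q (Suc m) k * qp q k * qp q (Suc m - k)
          = (q ^ Suc k' * qbin q m (Suc k') + qbin q m k') * qp q (Suc k') * qp q (m - k')"
        using Suc by simp
      also have "\<dots> = q ^ Suc k' * (qbin q m (Suc k') * qp q (Suc k') * qp q (m - Suc k')) * (1 - q ^ (m - k'))
           + (qbin q m k' * qp q k' * qp q (m - k')) * (1 - q ^ Suc k')"
        unfolding e qp_Suc by (simp add: algebra_simps)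
      also have "\<dots> = qp q m * (q ^ Suc k' * (1 - q ^ (m - k')) + (1 - q ^ Suc k'))"
        unfolding ih1 ih2 by (simp add: algebra_simps)
      also have "q ^ Suc k' * (1 - q ^ (m - k')) = q ^ Suc k' - q ^ Suc m"
        using lt by (simp add: algebra_simps power_add[symmetric])
      finally show ?thesis by (simp add: qp_Suc algebra_simps)
    qed
  qed
qed

lemma qp_nth0: "fps_nth q 0 = 0 \<Longrightarrow> fps_nth (qp q n) 0 = 1"
  by (induction n) (simp_all add: qp_Suc fps_power_zeroth)

lemma qp_nz: "fps_nth q 0 = 0 \<Longrightarrow> qp q n \<noteq> 0"
  using qp_nth0[of q n] by auto

lemma qbin_sym: assumes "fps_nth q 0 = 0" "k \<le> m" shows "qbin q m (m - k) = qbin q m k"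
proof -
  have "qbin q m (m - k) * (qp q k * qp q (m - k)) = qbin q m k * (qp q k * qp q (m - k))"
    using qbin_prod[of k m q] qbin_prod[of "m - k" m q] assms(2) by (simp add: algebra_simps)
  then show ?thesis using qp_nz[OF assms(1)] by simp
qed


lemma coeff_sum_monom_atMost:
  "coeff (\<Sum>k\<le>m. monom (f k) k) j = (if j \<le> m then f j else 0)"
  by (simp add: coeff_sum)

definition qc :: "int fps \<Rightarrow> int fps \<Rightarrow> int fps \<Rightarrow> nat \<Rightarrow> nat \<Rightarrow> int fps" where
  "qc q y z m k = q ^ tm k * qbin q m k * z ^ k * y ^ (m - k)"

lemma qbinom_thm:
  "(\<Prod>i<m. [:y, z * q ^ i:]) = (\<Sum>k\<le>m. monom (qc q y z m k) k)"
proof (induction m arbitrary: z)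
  case 0 then show ?case by (simp add: qc_def monom_0 one_pCons)
next
  case (Suc m)
  have "(\<Prod>i<Suc m. [:y, z * q ^ i:]) = [:y, z:] * (\<Prod>i<m. [:y, (z * q) * q ^ i:])"
    unfolding prod.lessThan_Suc_shift by (simp del: prod.lessThan_Suc add: ac_simps)
  also have "\<dots> = [:y, z:] * (\<Sum>k\<le>m. monom (qc q y (z * q) m k) k)"
    using Suc.IH by simp
  finally have e: "(\<Prod>i<Suc m. [:y, z * q ^ i:]) = [:y, z:] * (\<Sum>k\<le>m. monom (qc q y (z * q) m k) k)" .
  show ?case
  proof (rule poly_eqI)
    fix j
    let ?P = "\<Sum>k\<le>m. monom (qc q y (z * q) m k) k"
    have cP: "coeff ([:y, z:] * ?P) j = y * coeff ?P j + (case j of 0 \<Rightarrow> 0 | Suc j' \<Rightarrow> z * coeff ?P j')"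
      by (cases j) (simp_all add: coeff_pCons)
    show "coeff (\<Prod>i<Suc m. [:y, z * q ^ i:]) j = coeff (\<Sum>k\<le>Suc m. monom (qc q y z (Suc m) k) k) j"
    proof (cases j)
      case 0
      then show ?thesis unfolding e cP coeff_sum_monom_atMost by (simp add: qc_def)
    next
      case (Suc j')
      consider "j' < m" | "j' = m" | "m < j'" by linarith
      then show ?thesis
      proof cases
        case 1
        have ym: "y * y ^ (m - Suc j') = y ^ (m - j')"
          using 1 by (metis Suc_diff_Suc power_Suc)
        have "coeff ([:y, z:] * ?P) j = y * qc q y (z * q) m (Suc j') + z * qc q y (z * q) m j'"
          unfolding cP coeff_sum_monom_atMost using 1 Suc by simp
        also have "y * qc q y (z * q) m (Suc j') = q ^ tm (Suc j') * qbin q m (Suc j') * (z * q) ^ Suc j' * y ^ (m - j')"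
          unfolding qc_def ym[symmetric] by (simp add: ac_simps)
        also have "q ^ tm (Suc j') * qbin q m (Suc j') * (z * q) ^ Suc j' * y ^ (m - j') + z * qc q y (z * q) m j' = qc q y z (Suc m) j"
          using Suc 1 by (simp add: qc_def power_add power_mult_distrib algebra_simps)
        finally show ?thesis unfolding e coeff_sum_monom_atMost using Suc 1 by simp
      next
        case 2
        have "coeff ([:y, z:] * ?P) j = z * qc q y (z * q) m m"
          unfolding cP coeff_sum_monom_atMost using 2 Suc by simp
        also have "\<dots> = qc q y z (Suc m) j"
          using Suc 2 by (simp add: qc_def qbin_zero qbin_same power_add algebra_simps power_mult_distrib)
        finally show ?thesis unfolding e coeff_sum_monom_atMost using Suc 2 by simp
      next
        case 3
        show ?thesis unfolding e cP coeff_sum_monom_atMost using Suc 3 by simp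
      qed
    qed
  qed
qed


lemma pderiv_sum': "pderiv (sum f A) = (\<Sum>a\<in>A. pderiv (f a))"
  by (induction A rule: infinite_finite_induct) (simp_all add: pderiv_add)

lemma deriv_side1:
  fixes q :: "int fps"
  shows "poly (pderiv (\<Prod>i<Suc (2*n). [:q ^ n, (-1) * q ^ i:])) 1
    = (\<Sum>k\<le>Suc (2*n). of_nat k * qc q (q ^ n) (-1) (Suc (2*n)) k)"
  unfolding qbinom_thm pderiv_sum' pderiv_monom poly_sum poly_monom by simp

lemma deriv_side2:
  fixes q :: "int fps"
  shows "poly (pderiv (\<Prod>i<Suc (2*n). [:q ^ n, (-1) * q ^ i:])) 1
    = (\<Prod>i\<in>{..<Suc (2*n)} - {n}. q ^ n - q ^ i) * (- (q ^ n))"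
proof -
  let ?f = "\<lambda>i. [:q ^ n, (-1) * q ^ i:]"
  let ?A = "{..<Suc (2*n)}"
  let ?g = "\<lambda>a. poly (prod ?f (?A - {a}) * pderiv (?f a)) 1"
  have n: "n \<in> ?A" by simp
  have z: "?g a = 0" if "a \<in> ?A - {n}" for a
  proof -
    have "poly (prod ?f (?A - {a})) 1 = (\<Prod>i\<in>?A - {a}. poly (?f i) 1)" by (simp add: poly_prod)
    also have "\<dots> = 0" by (rule prod_zero) (use that in \<open>auto intro!: bexI[of _ n] simp: mult_minus1\<close>)
    finally show ?thesis by simp
  qed
  have "poly (pderiv (prod ?f ?A)) 1 = (\<Sum>a\<in>?A. ?g a)"
    unfolding pderiv_prod poly_sum by simp
  also have "\<dots> = ?g n + (\<Sum>a\<in>?A - {n}. ?g a)"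
    using sum.remove[OF _ n, of ?g] by simp
  also have "(\<Sum>a\<in>?A - {n}. ?g a) = 0" using z by (intro sum.neutral) blast
  also have "?g n = (\<Prod>i\<in>?A - {n}. q ^ n - q ^ i) * (- (q ^ n))"
    by (simp add: poly_prod pderiv_pCons)
  finally show ?thesis by simp
qed


lemma sum_split_rev:
  fixes f :: "nat \<Rightarrow> 'a::comm_monoid_add"
  shows "(\<Sum>k\<le>Suc (2*n). f k) = (\<Sum>j\<le>n. f (n - j) + f (Suc n + j))"
proof -
  have u: "{..Suc (2*n)} = {..n} \<union> {Suc n..Suc n + n}" by auto
  have "(\<Sum>k\<le>Suc (2*n). f k) = (\<Sum>k\<le>n. f k) + (\<Sum>k\<in>{Suc n..Suc n + n}. f k)"
    unfolding u by (rule sum.union_disjoint) auto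
  also have "(\<Sum>k\<le>n. f k) = (\<Sum>j\<le>n. f (n - j))"
    using sum.atLeastAtMost_rev[of f 0 n] by (simp add: atLeast0AtMost)
  also have "(\<Sum>k\<in>{Suc n..Suc n + n}. f k) = (\<Sum>j\<le>n. f (Suc n + j))"
    using sum.atLeastAtMost_shift_bounds[of f 0 "Suc n" n] by (simp add: atLeast0AtMost comp_def add.commute)
  finally show ?thesis by (simp add: sum.distrib)
qed

lemma prod_split_mid:
  fixes g :: "nat \<Rightarrow> 'a::comm_monoid_mult"
  shows "(\<Prod>i\<in>{..<Suc (2*n)} - {n}. g i) = (\<Prod>i<n. g i) * (\<Prod>j<n. g (Suc n + j))"
proof -
  have u: "{..<Suc (2*n)} - {n} = {..<n} \<union> {Suc n..<Suc n + n}" by auto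
  have "(\<Prod>i\<in>{..<Suc (2*n)} - {n}. g i) = (\<Prod>i<n. g i) * (\<Prod>i\<in>{Suc n..<Suc n + n}. g i)"
    unfolding u by (rule prod.union_disjoint) auto
  also have "(\<Prod>i\<in>{Suc n..<Suc n + n}. g i) = (\<Prod>j<n. g (Suc n + j))"
    using prod.atLeastLessThan_shift_bounds[of g 0 "Suc n" n] by (simp add: atLeast0LessThan comp_def add.commute)
  finally show ?thesis .
qed

lemma prod_low:
  fixes q :: "int fps"
  shows "(\<Prod>i<n. q ^ (n + r) - q ^ i) = (-1) ^ n * q ^ tm n * (\<Prod>i<n. 1 - q ^ (Suc i + r))"
proof (induction n arbitrary: r)
  case 0 then show ?case by simp
next
  case (Suc n)
  let ?P = "\<Prod>i<n. 1 - q ^ (Suc i + Suc r)"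
  have "(\<Prod>i<Suc n. q ^ (Suc n + r) - q ^ i) = (\<Prod>i<n. q ^ (n + Suc r) - q ^ i) * (q ^ (Suc n + r) - q ^ n)"
    by simp
  also have "\<dots> = (-1) ^ n * q ^ tm n * ?P * (q ^ (Suc n + r) - q ^ n)"
    using Suc.IH[of "Suc r"] by simp
  also have "q ^ (Suc n + r) - q ^ n = - (q ^ n) * (1 - q ^ (Suc 0 + r))"
    by (simp add: algebra_simps power_add)
  finally have eq1: "(\<Prod>i<Suc n. q ^ (Suc n + r) - q ^ i) = (-1) ^ n * q ^ tm n * ?P * (- (q ^ n) * (1 - q ^ (Suc 0 + r)))" .
  have eq2: "(\<Prod>i<Suc n. 1 - q ^ (Suc i + r)) = (1 - q ^ (Suc 0 + r)) * ?P"
    unfolding prod.lessThan_Suc_shift by simp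
  have eq3: "(-1) ^ Suc n * q ^ tm (Suc n) = (-1) * ((-1) ^ n * q ^ tm n * q ^ n)"
    by (simp add: power_add)
  show ?case unfolding eq1 eq2 eq3 by (simp only: mult_ac minus_mult_left[symmetric] mult_minus1 mult_1 minus_mult_right[symmetric])
qed

lemma prod_mid:
  fixes q :: "int fps"
  shows "(\<Prod>i\<in>{..<Suc (2*n)} - {n}. q ^ n - q ^ i) = (-1) ^ n * q ^ (tm n + n * n) * qp q n ^ 2"
proof -
  have a: "(\<Prod>i<n. q ^ n - q ^ i) = (-1) ^ n * q ^ tm n * qp q n"
    using prod_low[of q n 0] by (simp add: qp_def)
  have b: "(\<Prod>j<n. q ^ n - q ^ (Suc n + j)) = q ^ (n * n) * qp q n"
  proof -
    have "(\<Prod>j<n. q ^ n - q ^ (Suc n + j)) = (\<Prod>j<n. q ^ n * (1 - q ^ Suc j))"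
      by (intro prod.cong) (simp_all add: algebra_simps power_add)
    also have "\<dots> = (q ^ n) ^ n * qp q n" by (simp add: prod.distrib qp_def)
    finally show ?thesis by (simp add: power_mult)
  qed
  show ?thesis unfolding prod_split_mid a b by (simp add: power_add power2_eq_square algebra_simps)
qed

lemma tm_sym: assumes "k + s = Suc (2 * n)" shows "tm s + n * k = tm k + n * s"
proof -
  have a: "int (tm k) * 2 + int k = int k * int k" using tm_double[of k] by (metis of_nat_add of_nat_mult of_nat_numeral)
  have b: "int (tm s) * 2 + int s = int s * int s" using tm_double[of s] by (metis of_nat_add of_nat_mult of_nat_numeral)
  have c: "int k + int s = 2 * int n + 1" using assms by simp
  have "2 * (int (tm s) + int n * int k) = 2 * (int (tm k) + int n * int s)"
  proof -
    have "2 * (int (tm s) + int n * int k) - 2 * (int (tm k) + int n * int s)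
        = (int s - int k) * (int k + int s - 2 * int n - 1)"
      using a b by (simp add: algebra_simps)
    also have "\<dots> = 0" using c by simp
    finally show ?thesis by simp
  qed
  then have "int (tm s + n * k) = int (tm k + n * s)" by simp
  then show ?thesis by (simp only: of_nat_eq_iff)
qed

lemma tm_exp: assumes "j \<le> n" shows "tm (n - j) + n * (Suc n + j) = tm (Suc j) + (tm n + n * n + n)"
proof -
  obtain r where r: "n = j + r" using assms le_Suc_ex by blast
  have "tm (n - j) = tm r" using r by simp
  moreover have "tm n = tm j + tm r + j * r" using r tm_add by simp
  moreover have "tm j * 2 + j = j * j" by (rule tm_double)
  ultimately show ?thesis using r by (simp add: algebra_simps)
qed


lemma csym:
  fixes q :: "int fps"
  assumes q0: "fps_nth q 0 = 0" and k: "k \<le> Suc (2*n)"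
  shows "qc q (q ^ n) (-1) (Suc (2*n)) (Suc (2*n) - k) = - qc q (q ^ n) (-1) (Suc (2*n)) k"
proof -
  let ?m = "Suc (2*n)"
  have s: "qbin q ?m (?m - k) = qbin q ?m k" using qbin_sym[OF q0 k] .
  have e: "tm (?m - k) + n * k = tm k + n * (?m - k)" using tm_sym[of k "?m - k" n] k by simp
  have sg: "(-1::int fps) ^ (?m - k) = - ((-1) ^ k)"
  proof -
    have "(-1::int fps) ^ (?m - k) * (-1) ^ k = (-1) ^ ?m" using k by (simp add: power_add[symmetric])
    also have "\<dots> = -1" by simp
    finally have "(-1::int fps) ^ (?m - k) * (-1) ^ k * (-1) ^ k = - ((-1) ^ k)" by simp
    moreover have "(-1::int fps) ^ k * (-1) ^ k = 1" by (simp add: power_add[symmetric] flip: power_mult_distrib)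
    ultimately show ?thesis by (simp add: mult.assoc)
  qed
  have "qc q (q ^ n) (-1) ?m (?m - k) = q ^ (tm (?m - k) + n * k) * qbin q ?m k * (-1) ^ (?m - k)"
    unfolding qc_def s using k by (simp add: power_add power_mult[symmetric] mult_ac)
  also have "\<dots> = - (q ^ (tm k + n * (?m - k)) * qbin q ?m k * (-1) ^ k)"
    unfolding e sg by simp
  also have "\<dots> = - qc q (q ^ n) (-1) ?m k"
    unfolding qc_def by (simp add: power_add power_mult[symmetric] mult_ac)
  finally show ?thesis .
qed

lemma jacobi_fin:
  fixes q :: "int fps"
  assumes q0: "fps_nth q 0 = 0" and qnz: "q \<noteq> 0"
  shows "(\<Sum>j\<le>n. of_nat (2*j+1) * (-1) ^ j * q ^ tm (Suc j) * qbin q (Suc (2*n)) (n - j)) = qp q n ^ 2"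
proof -
  let ?m = "Suc (2*n)"
  let ?c = "qc q (q ^ n) (-1) ?m"
  let ?Q = "q ^ (tm n + n * n + n)"
  have "(\<Sum>k\<le>?m. of_nat k * ?c k) = (\<Sum>j\<le>n. of_nat (n - j) * ?c (n - j) + of_nat (Suc n + j) * ?c (Suc n + j))"
    by (rule sum_split_rev)
  also have "\<dots> = (\<Sum>j\<le>n. - (of_nat (2*j+1) * ?c (n - j)))"
  proof (rule sum.cong)
    fix j assume j: "j \<in> {..n}"
    have "?c (Suc n + j) = ?c (?m - (n - j))" using j by (simp add: Suc_diff_le)
    also have "\<dots> = - ?c (n - j)" using csym[OF q0, of "n - j" n] by simp
    finally have "?c (Suc n + j) = - ?c (n - j)" .
    then have "of_nat (n - j) * ?c (n - j) + of_nat (Suc n + j) * ?c (Suc n + j)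
       = ((of_nat (n - j) :: int fps) - of_nat (Suc n + j)) * ?c (n - j)"
      by (simp only: left_diff_distrib mult_minus_right diff_conv_add_uminus distrib_right mult_minus_left)
    also have "(of_nat (n - j) :: int fps) - of_nat (Suc n + j) = - of_nat (2*j+1)"
      using j by (simp add: of_nat_diff algebra_simps)
    finally show "of_nat (n - j) * ?c (n - j) + of_nat (Suc n + j) * ?c (Suc n + j) = - (of_nat (2*j+1) * ?c (n - j))"
      by (simp only: mult_minus_left)
  qed simp
  finally have s1: "(\<Sum>k\<le>?m. of_nat k * ?c k) = - (\<Sum>j\<le>n. of_nat (2*j+1) * ?c (n - j))"
    by (simp add: sum_negf)
  have "(\<Sum>k\<le>?m. of_nat k * ?c k) = (-1) ^ n * q ^ (tm n + n * n) * qp q n ^ 2 * (- (q ^ n))"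
    using deriv_side1[where n=n and q=q] deriv_side2[where n=n and q=q] prod_mid[where n=n and q=q] by simp
  with s1 have s2: "(\<Sum>j\<le>n. of_nat (2*j+1) * ?c (n - j)) = (-1) ^ n * qp q n ^ 2 * ?Q"
    by (simp add: power_add algebra_simps)
  have cj: "?c (n - j) = (-1) ^ (n - j) * qbin q ?m (n - j) * q ^ tm (Suc j) * ?Q" if "j \<le> n" for j
  proof -
    have "?m - (n - j) = Suc n + j" using that by simp
    moreover have "(q ^ n) ^ (Suc n + j) = q ^ (n * (Suc n + j))" by (simp only: power_mult)
    ultimately have "?c (n - j) = q ^ (tm (n - j) + n * (Suc n + j)) * qbin q ?m (n - j) * (-1) ^ (n - j)"
      unfolding qc_def by (simp only: power_add mult_ac)
    also have "tm (n - j) + n * (Suc n + j) = tm (Suc j) + (tm n + n * n + n)" using tm_exp[OF that] .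
    finally show ?thesis by (simp add: power_add mult_ac)
  qed
  let ?S = "\<Sum>j\<le>n. of_nat (2*j+1) * (-1) ^ (n - j) * q ^ tm (Suc j) * qbin q ?m (n - j)"
  have "?S * ?Q = (\<Sum>j\<le>n. of_nat (2*j+1) * ?c (n - j))"
    unfolding sum_distrib_right
  proof (intro sum.cong refl)
    fix j assume "j \<in> {..n}"
    then have "j \<le> n" by simp
    show "of_nat (2*j+1) * (-1) ^ (n - j) * q ^ tm (Suc j) * qbin q ?m (n - j) * ?Q = of_nat (2*j+1) * ?c (n - j)"
      unfolding cj[OF \<open>j \<le> n\<close>] by (simp only: mult_ac)
  qed
  also have "\<dots> = ((-1) ^ n * qp q n ^ 2) * ?Q" using s2 by simp
  finally have "?S = (-1) ^ n * qp q n ^ 2" using qnz by simp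
  then have "(-1) ^ n * ?S = qp q n ^ 2" by (simp add: mult.assoc[symmetric] flip: power_add power_mult_distrib)
  moreover have "(-1) ^ n * ?S = (\<Sum>j\<le>n. of_nat (2*j+1) * (-1) ^ j * q ^ tm (Suc j) * qbin q ?m (n - j))"
  proof -
    have "(-1::int fps) ^ n * (-1) ^ (n - j) = (-1) ^ j" if "j \<le> n" for j
    proof -
      have "(-1::int fps) ^ n = (-1) ^ (n - j) * (-1) ^ j" using that by (simp add: power_add[symmetric])
      then have "(-1::int fps) ^ n * (-1) ^ (n - j) = ((-1) ^ (n - j) * (-1) ^ (n - j)) * (-1) ^ j" by (simp add: mult_ac)
      also have "(-1::int fps) ^ (n - j) * (-1) ^ (n - j) = 1" by (simp flip: power_add power_mult_distrib)
      finally show ?thesis by simp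
    qed
    then show ?thesis unfolding sum_distrib_left by (intro sum.cong) (simp_all add: mult_ac)
  qed
  ultimately show ?thesis by simp
qed


lemma qp_split: "a \<le> b \<Longrightarrow> qp q b = qp q a * (\<Prod>i\<in>{a..<b}. 1 - q ^ Suc i)"
  unfolding qp_def using prod.atLeastLessThan_concat[of 0 a b "\<lambda>i. 1 - q ^ Suc i"]
  by (simp add: atLeast0LessThan)

lemma qp_qbin:
  assumes q0: "fps_nth q 0 = 0" and j: "j \<le> n"
  shows "qp q n * qbin q (Suc (2*n)) (n - j)
    = (\<Prod>i\<in>{n-j..<n}. 1 - q ^ Suc i) * (\<Prod>i\<in>{Suc (n+j)..<Suc (2*n)}. 1 - q ^ Suc i)"
proof -
  let ?E1 = "\<Prod>i\<in>{n-j..<n}. 1 - q ^ Suc i"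
  let ?E2 = "\<Prod>i\<in>{Suc (n+j)..<Suc (2*n)}. 1 - q ^ Suc i"
  have "qbin q (Suc (2*n)) (n - j) * qp q (n - j) * qp q (Suc (2*n) - (n - j)) = qp q (Suc (2*n))"
    using qbin_prod[of "n - j" "Suc (2*n)" q] by simp
  moreover have "Suc (2*n) - (n - j) = Suc (n + j)" using j by simp
  moreover have "qp q (Suc (2*n)) = qp q (Suc (n+j)) * ?E2" using qp_split[of "Suc (n+j)" "Suc (2*n)" q] j by simp
  ultimately have "(qbin q (Suc (2*n)) (n - j) * qp q (n - j)) * qp q (Suc (n+j)) = ?E2 * qp q (Suc (n+j))"
    by (simp add: mult_ac)
  then have e2: "qbin q (Suc (2*n)) (n - j) * qp q (n - j) = ?E2" using qp_nz[OF q0] by simp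
  have e1: "qp q n = qp q (n - j) * ?E1" using qp_split[of "n - j" n q] by simp
  show ?thesis unfolding e1 e2[symmetric] by (simp add: mult_ac)
qed

lemma cg_one_factor: "N \<le> e \<Longrightarrow> cg m N (1 - fps_X ^ e) 1"
  unfolding cg_def
  by (intro exI[of _ 0] exI[of _ "- (fps_X ^ (e - N))"]) (simp add: power_add[symmetric])

lemma cg_prod_one:
  assumes "\<And>i. i \<in> S \<Longrightarrow> a \<le> i"
  shows "cg m (d * Suc a) (\<Prod>i\<in>S. 1 - (fps_X ^ d) ^ Suc i) 1"
proof -
  have "cg m (d * Suc a) (\<Prod>i\<in>S. 1 - (fps_X ^ d) ^ Suc i) (\<Prod>i\<in>S. 1)"
  proof (rule cg_prod)
    fix i assume "i \<in> S"
    then have "d * Suc a \<le> d * Suc i" using assms by simp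
    then show "cg m (d * Suc a) (1 - (fps_X ^ d) ^ Suc i) 1"
      unfolding power_mult[symmetric] by (rule cg_one_factor)
  qed
  then show ?thesis by simp
qed

lemma cg_mult_X: "cg m N A B \<Longrightarrow> cg m (N + e) (fps_X ^ e * A) (fps_X ^ e * B)"
  unfolding cg_def
proof (elim exE)
  fix C D assume h: "A = B + fps_const m * C + fps_X ^ N * D"
  show "\<exists>C D. fps_X ^ e * A = fps_X ^ e * B + fps_const m * C + fps_X ^ (N + e) * D"
    by (intro exI[of _ "fps_X ^ e * C"] exI[of _ D]) (simp add: h algebra_simps power_add)
qed

lemma cg_mult_left: "cg m N A B \<Longrightarrow> cg m N (E * A) (E * B)"
  by (rule cg_mult[OF cg_refl])

lemma jacobi_trunc:
  assumes d: "d > 0"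
  shows "cg 0 (d * Suc n) (qp (fps_X ^ d) n ^ 3)
           (\<Sum>j\<le>n. of_nat (2*j+1) * (-1) ^ j * (fps_X ^ d) ^ tm (Suc j))"
proof -
  let ?q = "fps_X ^ d :: int fps"
  have q0: "fps_nth ?q 0 = 0" using d by simp
  have qnz: "?q \<noteq> 0" by simp
  have "qp ?q n ^ 3 = qp ?q n * qp ?q n ^ 2" by (simp add: power_numeral_reduce)
  also have "\<dots> = (\<Sum>j\<le>n. of_nat (2*j+1) * (-1) ^ j * ?q ^ tm (Suc j) * (qp ?q n * qbin ?q (Suc (2*n)) (n - j)))"
    unfolding jacobi_fin[OF q0 qnz, symmetric] sum_distrib_left by (simp add: mult_ac)
  finally have e: "qp ?q n ^ 3 = \<dots>" .
  show ?thesis unfolding e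
  proof (rule cg_sum)
    fix j assume "j \<in> {..n}"
    then have j: "j \<le> n" by simp
    let ?E1 = "\<Prod>i\<in>{n-j..<n}. 1 - ?q ^ Suc i"
    let ?E2 = "\<Prod>i\<in>{Suc (n+j)..<Suc (2*n)}. 1 - ?q ^ Suc i"
    have "cg 0 (d * Suc (n - j)) (?E1 * ?E2) (1 * 1)"
      by (intro cg_mult cg_prod_one) auto
    then have "cg 0 (d * Suc (n - j) + d * tm (Suc j)) (fps_X ^ (d * tm (Suc j)) * (?E1 * ?E2)) (fps_X ^ (d * tm (Suc j)) * 1)"
      by (intro cg_mult_X) simp
    then have "cg 0 (d * Suc (n - j) + d * tm (Suc j)) (?q ^ tm (Suc j) * (?E1 * ?E2)) (?q ^ tm (Suc j))"
      by (simp add: power_mult)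
    then have "cg 0 (d * Suc n) (?q ^ tm (Suc j) * (?E1 * ?E2)) (?q ^ tm (Suc j))"
    proof (rule cg_mono_N)
      have "n \<le> (n - j) + tm (Suc j)" using tm_ge[of j] j by simp
      then have "d * Suc n \<le> d * (Suc (n - j) + tm (Suc j))" by simp
      then show "d * Suc n \<le> d * Suc (n - j) + d * tm (Suc j)" by (simp add: algebra_simps)
    qed
    then have "cg 0 (d * Suc n) (of_nat (2*j+1) * (-1) ^ j * (?q ^ tm (Suc j) * (?E1 * ?E2))) (of_nat (2*j+1) * (-1) ^ j * ?q ^ tm (Suc j))"
      using cg_mult_left by (simp add: mult.assoc)
    then show "cg 0 (d * Suc n) (of_nat (2*j+1) * (-1) ^ j * ?q ^ tm (Suc j) * (qp ?q n * qbin ?q (Suc (2*n)) (n - j)))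
                (of_nat (2*j+1) * (-1) ^ j * ?q ^ tm (Suc j))"
      unfolding qp_qbin[OF q0 j] by (simp add: mult.assoc)
  qed
qed

lemma coef_mod4_int: "\<exists>t. int (2*j+1) * (-1) ^ j = 1 + 4 * t"
proof (cases "even j")
  case True
  then obtain r where "j = 2 * r" by blast
  moreover have "(-1::int) ^ j = 1" using True by (simp add: neg_one_even_power)
  ultimately show ?thesis by (intro exI[of _ "int r"]) simp
next
  case False
  then obtain r where "j = 2 * r + 1" using oddE by blast
  moreover have "(-1::int) ^ j = -1" using False by (simp add: neg_one_odd_power)
  ultimately show ?thesis by (intro exI[of _ "- int r - 1"]) (simp add: algebra_simps)
qed

lemma coef_mod4: "\<exists>t. (of_nat (2*j+1) * (-1) ^ j :: int fps) = 1 + fps_const 4 * fps_const t"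
proof -
  obtain t where t: "int (2*j+1) * (-1) ^ j = 1 + 4 * t" using coef_mod4_int by blast
  have "(of_nat (2*j+1) * (-1) ^ j :: int fps) = of_int (int (2*j+1) * (-1) ^ j)" by simp
  also have "\<dots> = fps_const (1 + 4 * t)" unfolding t fps_of_int[symmetric] by simp
  also have "\<dots> = 1 + fps_const 4 * fps_const t" by (simp only: fps_const_mult fps_const_add[symmetric] fps_const_1_eq_1)
  finally show ?thesis by blast
qed

lemma jacobi4:
  assumes d: "d > 0"
  shows "cg 4 (d * Suc n) (qp (fps_X ^ d) n ^ 3) (\<Sum>j\<le>n. (fps_X ^ d) ^ tm (Suc j))"
proof -
  have a: "cg 4 (d * Suc n) (qp (fps_X ^ d) n ^ 3)
           (\<Sum>j\<le>n. of_nat (2*j+1) * (-1) ^ j * (fps_X ^ d) ^ tm (Suc j))"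
    using cg_dvd_m[OF jacobi_trunc[OF d]] by simp
  have b: "cg 4 (d * Suc n) (\<Sum>j\<le>n. of_nat (2*j+1) * (-1) ^ j * (fps_X ^ d) ^ tm (Suc j)) (\<Sum>j\<le>n. (fps_X ^ d) ^ tm (Suc j))"
  proof (rule cg_sum)
    fix j
    obtain t where t: "(of_nat (2*j+1) * (-1) ^ j :: int fps) = 1 + fps_const 4 * fps_const t" using coef_mod4 by blast
    show "cg 4 (d * Suc n) (of_nat (2*j+1) * (-1) ^ j * (fps_X ^ d) ^ tm (Suc j)) ((fps_X ^ d) ^ tm (Suc j))"
      unfolding t cg_def
      by (intro exI[of _ "fps_const t * (fps_X ^ d) ^ tm (Suc j)"] exI[of _ 0]) (simp only: distrib_right mult.assoc mult_1 mult_zero_right add_0_right)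
  qed
  show ?thesis by (rule cg_trans[OF a b])
qed


definition Pi24 :: "nat \<Rightarrow> int fps" where
  "Pi24 L = (\<Prod>k\<in>{1..L}. (1 - fps_X ^ k) ^ 24)"

lemma Delta_nth: "fps_nth Delta n = fps_nth (fps_X * Pi24 n) n"
  unfolding Delta_def Pi24_def by simp

lemma Delta_trunc: "cg 0 (Suc L) Delta (fps_X * Pi24 L)"
proof (rule cg_of_nth)
  fix i assume "i < Suc L"
  then have iL: "i \<le> L" by simp
  have u: "{1..L} = {1..i} \<union> {Suc i..L}" using iL by auto
  have "Pi24 L = Pi24 i * (\<Prod>k\<in>{Suc i..L}. (1 - fps_X ^ k) ^ 24)"
    unfolding Pi24_def u by (rule prod.union_disjoint) auto
  moreover have "cg 0 (Suc i) (\<Prod>k\<in>{Suc i..L}. (1 - fps_X ^ k) ^ 24) (\<Prod>k\<in>{Suc i..L}. 1 ^ 24)"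
    by (intro cg_prod cg_power cg_one_factor) simp
  ultimately have "cg 0 (Suc i) (Pi24 L) (Pi24 i * 1)"
    using cg_mult_left[of 0 "Suc i" _ 1 "Pi24 i"] by simp
  then have "cg 0 (Suc i) (fps_X * Pi24 L) (fps_X * Pi24 i)"
    using cg_mult_left by simp
  then have "fps_nth (fps_X * Pi24 L) i = fps_nth (fps_X * Pi24 i) i"
    using cg_nth[of 0 "Suc i" "fps_X * Pi24 L" "fps_X * Pi24 i" i] by (simp only: cong_0 lessI)
  then show "fps_nth Delta i = fps_nth (fps_X * Pi24 L) i" by (simp add: Delta_nth)
qed

lemma cg_byeq: "A = B + fps_const m * C \<Longrightarrow> cg m N A B"
  unfolding cg_def by (intro exI[of _ C] exI[of _ 0]) simp

lemma id2: "(1 - y) ^ 2 = (1 - y ^ 2) + 2 * (y ^ 2 - y)" for y :: "'a::comm_ring_1"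
  by (simp add: power2_eq_square algebra_simps)

lemma id4: "(1 - y) ^ 4 = (1 - y ^ 2) ^ 2 + 4 * (2 * y ^ 2 - y - y ^ 3)" for y :: "'a::comm_ring_1"
proof -
  have "(1 - y) ^ 4 = ((1 - y)^2)^2" by (simp flip: power_mult)
  also have "\<dots> = (1 - 2*y + y*y) * (1 - 2*y + y*y)" by (simp add: power2_eq_square algebra_simps)
  also have "(1 - y ^ 2) ^ 2 + 4 * (2 * y ^ 2 - y - y ^ 3) = (1 - y*y)*(1-y*y) + 4 * (2*y*y - y - y*y*y)"
    by (simp add: power2_eq_square power3_eq_cube algebra_simps)
  moreover have "(1 - 2*y + y*y) * (1 - 2*y + y*y) = (1 - y*y)*(1-y*y) + 4 * (2*y*y - y - y*y*y)"
    by (simp add: algebra_simps)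
  ultimately show ?thesis by simp
qed

lemma fc4: "fps_const (4::int) = 4" by (simp add: numeral_fps_const)
lemma fc2: "fps_const (2::int) = 2" by (simp add: numeral_fps_const)

lemma f4: "cg 4 N ((1 - y) ^ 4) ((1 - y ^ 2) ^ 2)"
  by (rule cg_byeq[where C = "2 * y ^ 2 - y - y ^ 3"]) (unfold fc4, rule id4)

lemma f2: "cg 2 N ((1 - y) ^ 2) (1 - y ^ 2)"
  by (rule cg_byeq[where C = "y ^ 2 - y"]) (unfold fc2, rule id2)

lemma pow_pow: "(a ^ m) ^ n = a ^ (m * n)" for a :: "'a::monoid_mult" by (simp add: power_mult)

lemma f24: "cg 4 N ((1 - y) ^ 24) (((1 - y ^ 4) ^ 3) ^ 2)"
proof -
  have a: "cg 4 N ((1 - y) ^ 8) ((1 - y ^ 2) ^ 4)"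
    using cg_power[OF f4[of N y], of 2] unfolding pow_pow by simp
  have b: "cg 4 N ((1 - y ^ 2) ^ 4) ((1 - y ^ 4) ^ 2)"
    using f4[of N "y ^ 2"] unfolding pow_pow by simp
  have "cg 4 N ((1 - y) ^ 8) ((1 - y ^ 4) ^ 2)" by (rule cg_trans[OF a b])
  then have "cg 4 N (((1 - y) ^ 8) ^ 3) (((1 - y ^ 4) ^ 2) ^ 3)" by (rule cg_power)
  then show ?thesis unfolding pow_pow by simp
qed

lemma f72: "cg 2 N ((1 - y) ^ 72) ((1 - y ^ 8) ^ 3 * (1 - y ^ 16) ^ 3)"
proof -
  have a1: "cg 2 N ((1 - y) ^ 8) ((1 - y ^ 2) ^ 4)"
    using cg_power[OF f2[of N y], of 4] unfolding pow_pow by simp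
  have a2: "cg 2 N ((1 - y ^ 2) ^ 4) ((1 - y ^ 4) ^ 2)"
    using cg_power[OF f2[of N "y ^ 2"], of 2] unfolding pow_pow by simp
  have a3: "cg 2 N ((1 - y ^ 4) ^ 2) (1 - y ^ 8)"
    using f2[of N "y ^ 4"] unfolding pow_pow by simp
  have a: "cg 2 N ((1 - y) ^ 8) (1 - y ^ 8)" by (rule cg_trans[OF cg_trans[OF a1 a2] a3])
  have b: "cg 2 N ((1 - y ^ 8) ^ 2) (1 - y ^ 16)"
    using f2[of N "y ^ 8"] unfolding pow_pow by simp
  have c: "cg 2 N ((1 - y) ^ 72) ((1 - y ^ 8) ^ 9)" using cg_power[OF a, of 9] unfolding pow_pow by simp
  have e: "(1 - y ^ 8) ^ 9 = (1 - y ^ 8) ^ 3 * ((1 - y ^ 8) ^ 2) ^ 3"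
    unfolding pow_pow power_add[symmetric] by simp
  have d: "cg 2 N ((1 - y ^ 8) ^ 3 * ((1 - y ^ 8) ^ 2) ^ 3) ((1 - y ^ 8) ^ 3 * (1 - y ^ 16) ^ 3)"
    by (intro cg_mult_left cg_power b)
  show ?thesis using cg_trans[OF c d[folded e]] .
qed


lemma prod_1_L: "(\<Prod>k\<in>{1..L}. f k) = (\<Prod>i<L. f (Suc i))"
  using prod.atLeast1_atMost_eq[of f L] by simp

lemma qp_pow: "qp (fps_X ^ d) L = (\<Prod>k\<in>{1..L}. 1 - (fps_X ^ k) ^ d)"
proof -
  have e: "(fps_X ^ d) ^ Suc i = (fps_X ^ Suc i) ^ d" for i :: nat
    unfolding pow_pow by (simp only: mult.commute)
  show ?thesis unfolding prod_1_L qp_def by (rule prod.cong[OF refl]) (simp only: e)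
qed

definition Sd :: "nat \<Rightarrow> nat \<Rightarrow> int fps" where
  "Sd d L = (\<Sum>j\<le>L. (fps_X ^ d) ^ tm (Suc j))"

lemma Pi24_cong: "cg 4 (4 * Suc L) (Pi24 L) (Sd 4 L ^ 2)"
proof -
  have "cg 4 (4 * Suc L) (Pi24 L) (\<Prod>k\<in>{1..L}. ((1 - (fps_X ^ k) ^ 4) ^ 3) ^ 2)"
    unfolding Pi24_def by (intro cg_prod f24)
  also have "(\<Prod>k\<in>{1..L}. ((1 - (fps_X ^ k) ^ 4) ^ 3) ^ 2) = (qp (fps_X ^ 4) L ^ 3) ^ 2"
    unfolding qp_pow prod_power_distrib ..
  finally have "cg 4 (4 * Suc L) (Pi24 L) ((qp (fps_X ^ 4) L ^ 3) ^ 2)" .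
  moreover have "cg 4 (4 * Suc L) ((qp (fps_X ^ 4) L ^ 3) ^ 2) (Sd 4 L ^ 2)"
    unfolding Sd_def by (intro cg_power jacobi4) simp
  ultimately show ?thesis by (rule cg_trans)
qed

lemma Pi72_cong: "cg 2 (8 * Suc L) (Pi24 L ^ 3) (Sd 8 L * Sd 16 L)"
proof -
  have e: "Pi24 L ^ 3 = (\<Prod>k\<in>{1..L}. (1 - fps_X ^ k) ^ 72)"
    unfolding Pi24_def prod_power_distrib by (simp flip: power_mult)
  have "cg 2 (8 * Suc L) (Pi24 L ^ 3) (\<Prod>k\<in>{1..L}. (1 - (fps_X ^ k) ^ 8) ^ 3 * (1 - (fps_X ^ k) ^ 16) ^ 3)"
    unfolding e by (intro cg_prod f72)
  also have "(\<Prod>k\<in>{1..L}. (1 - (fps_X ^ k) ^ 8) ^ 3 * (1 - (fps_X ^ k) ^ 16) ^ 3) = qp (fps_X ^ 8) L ^ 3 * qp (fps_X ^ 16) L ^ 3"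
    unfolding qp_pow prod_power_distrib prod.distrib ..
  finally have a: "cg 2 (8 * Suc L) (Pi24 L ^ 3) (qp (fps_X ^ 8) L ^ 3 * qp (fps_X ^ 16) L ^ 3)" .
  have b: "cg 2 (8 * Suc L) (qp (fps_X ^ 8) L ^ 3) (Sd 8 L)"
    unfolding Sd_def by (rule cg_dvd_m[OF jacobi4]) simp_all
  have c: "cg 2 (8 * Suc L) (qp (fps_X ^ 16) L ^ 3) (Sd 16 L)"
    unfolding Sd_def by (rule cg_mono_N[OF cg_dvd_m[OF jacobi4]]) simp_all
  show ?thesis using cg_trans[OF a cg_mult[OF b c]] .
qed

lemma E4_cong: "cg 4 N E4 1"
proof (rule cg_byeq[where C = "Abs_fps (\<lambda>n. if n = 0 then 0 else 60 * sigma3 n)"])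
  show "E4 = 1 + fps_const 4 * Abs_fps (\<lambda>n. if n = 0 then 0 else 60 * sigma3 n)"
    unfolding E4_def by (rule fps_ext) simp
qed

lemma f_cong: "cg 4 (Suc L) f_form (fps_X * Sd 4 L ^ 2 + 2 * (fps_X ^ 3 * (Sd 8 L * Sd 16 L)))"
proof -
  have D1: "cg 4 (Suc L) Delta (fps_X * Sd 4 L ^ 2)"
  proof -
    have "cg 4 (Suc L) Delta (fps_X * Pi24 L)" using cg_dvd_m[OF Delta_trunc] by simp
    moreover have "cg 4 (Suc L) (Pi24 L) (Sd 4 L ^ 2)" using cg_mono_N[OF Pi24_cong] by simp
    ultimately show ?thesis using cg_trans cg_mult_left by blast
  qed
  have D3: "cg 2 (Suc L) (Delta ^ 3) (fps_X ^ 3 * (Sd 8 L * Sd 16 L))"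
  proof -
    have "cg 2 (Suc L) (Delta ^ 3) ((fps_X * Pi24 L) ^ 3)" using cg_power[OF cg_dvd_m[OF Delta_trunc]] by simp
    moreover have "(fps_X * Pi24 L) ^ 3 = fps_X ^ 3 * Pi24 L ^ 3" by (simp add: power_mult_distrib)
    moreover have "cg 2 (Suc L) (Pi24 L ^ 3) (Sd 8 L * Sd 16 L)" using cg_mono_N[OF Pi72_cong] by simp
    ultimately show ?thesis using cg_trans cg_mult_left by metis
  qed
  have "cg 4 (Suc L) (E4 ^ 6 * Delta) (1 ^ 6 * (fps_X * Sd 4 L ^ 2))"
    by (intro cg_mult cg_power E4_cong D1)
  moreover have "cg 4 (Suc L) (2 * Delta ^ 3) (2 * (fps_X ^ 3 * (Sd 8 L * Sd 16 L)))"
    by (rule cg_scale2[OF D3])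
  ultimately show ?thesis unfolding f_form_def using cg_add by fastforce
qed


lemma prod_sums_nth:
  assumes "finite A" "finite B"
  shows "fps_nth ((\<Sum>a\<in>A. fps_X ^ g a) * (\<Sum>b\<in>B. fps_X ^ h b)) i
         = int (card {p \<in> A \<times> B. g (fst p) + h (snd p) = i})"
proof -
  have "(\<Sum>a\<in>A. fps_X ^ g a) * (\<Sum>b\<in>B. fps_X ^ h b) = (\<Sum>p\<in>A \<times> B. (fps_X ^ (g (fst p) + h (snd p)) :: int fps))"
    unfolding sum_product sum.cartesian_product by (simp add: power_add case_prod_beta)
  then have "fps_nth ((\<Sum>a\<in>A. fps_X ^ g a) * (\<Sum>b\<in>B. (fps_X ^ h b :: int fps))) i
     = (\<Sum>p\<in>A \<times> B. if i = g (fst p) + h (snd p) then (1::int) else 0)"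
    by (simp add: fps_sum_nth)
  also have "\<dots> = int (card (A \<times> B \<inter> {p. i = g (fst p) + h (snd p)}))"
    using assms by (simp add: sum.If_cases)
  also have "A \<times> B \<inter> {p. i = g (fst p) + h (snd p)} = {p \<in> A \<times> B. g (fst p) + h (snd p) = i}" by auto
  finally show ?thesis .
qed

lemma Sd_alt: "Sd d L = (\<Sum>j\<le>L. fps_X ^ (d * tm (Suc j)))"
  unfolding Sd_def pow_pow ..

definition c1 :: "nat \<Rightarrow> nat" where
  "c1 l = card {p \<in> {..l} \<times> {..l}. 4 * tm (Suc (fst p)) + 4 * tm (Suc (snd p)) = l - 1}"

definition c2 :: "nat \<Rightarrow> nat" where
  "c2 l = card {p \<in> {..l} \<times> {..l}. 8 * tm (Suc (fst p)) + 16 * tm (Suc (snd p)) = l - 3}"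

lemma f_nth_cong:
  assumes "l \<ge> 1"
  shows "[fps_nth f_form l = int (c1 l) + 2 * (if l < 3 then 0 else int (c2 l))] (mod 4)"
proof -
  have "[fps_nth f_form l = fps_nth (fps_X * Sd 4 l ^ 2 + 2 * (fps_X ^ 3 * (Sd 8 l * Sd 16 l))) l] (mod 4)"
    using cg_nth[OF f_cong[of l]] by simp
  moreover have "fps_nth (fps_X * Sd 4 l ^ 2) l = int (c1 l)"
    using assms unfolding c1_def power2_eq_square Sd_alt by (simp add: prod_sums_nth)
  moreover have "fps_nth (2 * (fps_X ^ 3 * (Sd 8 l * Sd 16 l))) l = 2 * (if l < 3 then 0 else int (c2 l))"
    unfolding c2_def Sd_alt numeral_fps_const fps_mult_left_const_nth fps_X_power_mult_nth
    by (simp add: prod_sums_nth)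
  ultimately show ?thesis by simp
qed


lemma order_eq:
  fixes a b c d k :: int
  assumes "0 < a" "0 < b" "0 < c" "0 < d" "0 < k" "a * d = b * c" "a^2 + k * b^2 = c^2 + k * d^2"
  shows "a = c \<and> b = d"
proof -
  have "\<not> a < c" if "0 < a" "0 < b" "0 < c" "0 < d" "a * d = b * c" "a^2 + k * b^2 = c^2 + k * d^2" for a b c d
  proof
    assume ac: "a < c"
    have "b * c < d * c" using ac that mult_strict_right_mono[OF ac \<open>0 < d\<close>] by (simp add: mult.commute)
    then have "b < d" using \<open>0 < c\<close> by simp
    have "a^2 < c^2" using ac \<open>0 < a\<close> by (simp add: power_strict_mono)
    moreover have "b^2 < d^2" using \<open>b < d\<close> \<open>0 < b\<close> by (simp add: power_strict_mono)
    then have "k * b^2 < k * d^2" using \<open>0 < k\<close> by simp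
    ultimately show False using that by linarith
  qed
  from this[of a b c d] this[of c d a b] assms have "a = c" by (auto simp: mult.commute)
  then show ?thesis using assms by simp
qed

lemma brahma1: "(a^2 + k*b^2) * (c^2 + k*d^2) = (a*c + k*b*d)^2 + k*(a*d - b*c)^2" for a b c d k :: int
  by (simp add: power2_eq_square algebra_simps)

lemma brahma2: "(a^2 + k*b^2) * (c^2 + k*d^2) = (a*c - k*b*d)^2 + k*(a*d + b*c)^2" for a b c d k :: int
  by (simp add: power2_eq_square algebra_simps)

lemma uniq:
  fixes a b c d N k :: int
  assumes pos: "0 < a" "0 < b" "0 < c" "0 < d" and k: "k = 1 \<or> k = 2"
    and N1: "N = a^2 + k*b^2" and N2: "N = c^2 + k*d^2"
    and dv: "N dvd (a*d - b*c) \<or> N dvd (a*d + b*c)"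
  shows "(a = c \<and> b = d) \<or> (k = 1 \<and> a = d \<and> b = c)"
proof -
  have kp: "0 < k" using k by auto
  have Npos: "0 < N" using N1 pos kp by (simp add: add_pos_nonneg)
  have NN: "N^2 = (a*c + k*b*d)^2 + k*(a*d - b*c)^2" "N^2 = (a*c - k*b*d)^2 + k*(a*d + b*c)^2"
    using brahma1[of a k b c d] brahma2[of a k b c d] N1 N2 by (simp_all add: power2_eq_square)
  from dv show ?thesis
  proof
    assume h: "N dvd (a*d - b*c)"
    have "a*d - b*c = 0"
    proof (rule ccontr)
      assume nz: "a*d - b*c \<noteq> 0"
      have "\<bar>N\<bar> \<le> \<bar>a*d - b*c\<bar>" using dvd_imp_le_int[OF nz h] .
      then have s1: "N^2 \<le> (a*d - b*c)^2" by (simp only: abs_le_square_iff)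
      have s2: "(a*d - b*c)^2 \<le> k * (a*d - b*c)^2"
      proof -
        have "0 \<le> (k - 1) * (a*d - b*c)^2" using kp by simp
        then show ?thesis by (simp add: algebra_simps)
      qed
      have "0 < a*c + k*b*d" using pos kp by (simp add: add_pos_pos)
      then have s3: "0 < (a*c + k*b*d)^2" by simp
      show False using NN(1) s1 s2 s3 by linarith
    qed
    then have "a*d = b*c" by simp
    then have "a = c \<and> b = d" using order_eq[OF pos kp] N1 N2 by simp
    then show ?thesis by simp
  next
    assume h: "N dvd (a*d + b*c)"
    have pz: "0 < a*d + b*c" using pos by (simp add: add_pos_pos)
    have "\<bar>N\<bar> \<le> \<bar>a*d + b*c\<bar>" using dvd_imp_le_int[OF _ h] pz by simp
    then have s1: "N^2 \<le> (a*d + b*c)^2" by (simp only: abs_le_square_iff)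
    have s0: "0 \<le> (a*c - k*b*d)^2" by simp
    have Np: "0 < N^2" using Npos by simp
    have k1: "k = 1"
    proof (rule ccontr)
      assume "k \<noteq> 1"
      then have "k = 2" using k by simp
      then have "N^2 = (a*c - 2*b*d)^2 + 2*(a*d + b*c)^2" "0 \<le> (a*c - 2*b*d)^2" using NN(2) by simp_all
      then show False using s1 Np by linarith
    qed
    then have "(a*c - b*d)^2 \<le> 0" using NN(2) s1 by simp
    then have "a*c = b*d" by simp
    then have "a = d \<and> b = c" using order_eq[of a b d c 1] pos N1 N2 k1 by (simp add: add.commute)
    then show ?thesis using k1 by simp
  qed
qed


lemma sqrt_ex: "\<exists>s::nat. s^2 \<le> n \<and> n < (s+1)^2"
proof (induction n)
  case 0 then show ?case by (intro exI[of _ 0]) simp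
next
  case (Suc n)
  then obtain s where s: "s^2 \<le> n" "n < (s+1)^2" by blast
  show ?case
  proof (cases "Suc n < (s+1)^2")
    case True then show ?thesis using s by (intro exI[of _ s]) simp
  next
    case False
    then have "Suc n = (s+1)^2" using s by simp
    then show ?thesis by (intro exI[of _ "s+1"]) (simp add: power2_eq_square)
  qed
qed

lemma prime_not_sq: assumes "prime (p::nat)" shows "p \<noteq> x^2"
proof
  assume h: "p = x^2"
  then have "x dvd p" by simp
  then have "x = 1 \<or> x = p" using assms prime_nat_iff by blast
  then show False
  proof
    assume "x = 1" then show False using h assms by simp
  next
    assume "x = p"
    then have "p = p^2" using h by simp
    moreover have "p * 1 < p * p"
      using prime_gt_1_nat[OF assms] by (intro mult_strict_left_mono) auto
    ultimately show False by (simp add: power2_eq_square)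
  qed
qed

lemma prime_not_sq_int: assumes "prime (p::nat)" shows "int p \<noteq> x^2"
proof
  assume "int p = x^2"
  then have "p = (nat \<bar>x\<bar>)^2" by (metis nat_int of_nat_power abs_of_nonneg abs_ge_zero power2_abs int_nat_eq)
  then show False using prime_not_sq[OF assms] by blast
qed


lemma thue:
  fixes p s :: nat and t :: int
  assumes "p < (s+1)^2" "p > 0"
  shows "\<exists>x y::int. (x \<noteq> 0 \<or> y \<noteq> 0) \<and> \<bar>x\<bar> \<le> int s \<and> \<bar>y\<bar> \<le> int s \<and> int p dvd (x - t*y)"
proof -
  let ?D = "{0..int s} \<times> {0..int s}"
  let ?f = "\<lambda>u. (fst u - t * snd u) mod int p"
  have "?f ` ?D \<subseteq> {0..<int p}" using assms by auto
  then have "card (?f ` ?D) \<le> card {0..<int p}" by (intro card_mono) auto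
  also have "\<dots> = p" by simp
  also have "\<dots> < card ?D"
  proof -
    have "nat (int s + 1) = s + 1" by simp
    then show ?thesis using assms by (simp add: card_cartesian_product power2_eq_square)
  qed
  finally have "\<not> inj_on ?f ?D" using pigeonhole by blast
  then obtain u v where uv: "u \<in> ?D" "v \<in> ?D" "u \<noteq> v" "?f u = ?f v" unfolding inj_on_def by blast
  let ?x = "fst u - fst v" and ?y = "snd u - snd v"
  have "int p dvd ((fst u - t * snd u) - (fst v - t * snd v))"
    using uv(4) by (simp add: mod_eq_dvd_iff)
  moreover have "(fst u - t * snd u) - (fst v - t * snd v) = ?x - t * ?y" by (simp add: algebra_simps)
  moreover have "?x \<noteq> 0 \<or> ?y \<noteq> 0" using uv(3) by (auto simp: prod_eq_iff)
  moreover have "\<bar>?x\<bar> \<le> int s" "\<bar>?y\<bar> \<le> int s" using uv(1,2) by auto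
  ultimately show ?thesis by metis
qed


lemma rep_exists:
  fixes p :: nat and t k :: int
  assumes p: "prime p" "odd p" and k: "k = 1 \<or> k = 2" and t: "int p dvd t^2 + k"
  shows "\<exists>x y::int. 0 < x \<and> 0 < y \<and> x^2 + k * y^2 = int p"
proof -
  obtain s where s: "s^2 \<le> p" "p < (s+1)^2" using sqrt_ex by blast
  have ps: "s^2 < p" using s(1) prime_not_sq[OF p(1), of s] by linarith
  have p0: "p > 0" using p prime_gt_0_nat by blast
  obtain x y where xy: "x \<noteq> 0 \<or> y \<noteq> 0" "\<bar>x\<bar> \<le> int s" "\<bar>y\<bar> \<le> int s" "int p dvd (x - t*y)"
    using thue[OF s(2) p0, of t] by blast
  have kp: "0 < k" using k by auto
  have dv: "int p dvd x^2 + k * y^2"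
  proof -
    have "x^2 + k * y^2 = (x - t*y) * (x + t*y) + (t^2 + k) * y^2" by (simp add: power2_eq_square algebra_simps)
    moreover have "int p dvd (x - t*y) * (x + t*y)" using xy(4) by simp
    moreover have "int p dvd (t^2 + k) * y^2" using t by simp
    ultimately show ?thesis by simp
  qed
  have x2: "x^2 \<le> int s ^ 2" using xy(2) abs_le_square_iff[of x "int s"] by simp
  have y2: "y^2 \<le> int s ^ 2" using xy(3) abs_le_square_iff[of y "int s"] by simp
  have "int (s^2) < int p" using ps by (simp only: of_nat_less_iff)
  then have sp: "int s ^ 2 < int p" by simp
  have "k * y^2 \<le> k * int s ^ 2" using y2 kp by simp
  moreover have "k * int s ^ 2 \<le> k * int p" using sp kp by simp
  moreover have "(1 + k) * int p = int p + k * int p" by (simp add: algebra_simps)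
  ultimately have up: "x^2 + k * y^2 < (1 + k) * int p" using x2 sp by linarith
  have lo: "0 < x^2 + k * y^2"
  proof (cases "x = 0")
    case True
    then have "y \<noteq> 0" using xy(1) by simp
    then have "0 < k * y^2" using kp by simp
    then show ?thesis using True by simp
  next
    case False
    then have "0 < x^2" by simp
    moreover have "0 \<le> k * y^2" using kp by simp
    ultimately show ?thesis by linarith
  qed
  obtain q where q: "x^2 + k * y^2 = int p * q" using dv by blast
  have pp: "0 < int p" using p0 by simp
  have q0: "0 < q"
  proof -
    have "0 < int p * q" using lo q by simp
    then show ?thesis using pp by (simp add: zero_less_mult_iff)
  qed
  have q1: "q < 1 + k"
  proof -
    have "int p * q < int p * (1 + k)" using up q by (simp add: mult.commute)
    then show ?thesis using pp by simp
  qed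
  have nsq: "int p \<noteq> z^2" for z using prime_not_sq_int[OF p(1)] by blast
  have nsq2: "int p \<noteq> 2 * z^2" for z
  proof
    assume "int p = 2 * z^2"
    then have "even (int p)" by simp
    then show False using p(2) by simp
  qed
  show ?thesis
  proof (cases "q = 1")
    case True
    then have e: "x^2 + k * y^2 = int p" using q by simp
    have "x \<noteq> 0"
    proof
      assume "x = 0"
      then have "int p = k * y^2" using e by simp
      then show False using k nsq[of y] nsq2[of y] by auto
    qed
    moreover have "y \<noteq> 0" using e nsq[of x] by auto
    ultimately show ?thesis using e by (intro exI[of _ "\<bar>x\<bar>"] exI[of _ "\<bar>y\<bar>"]) simp
  next
    case False
    then have k2: "k = 2" "q = 2" using q0 q1 k by auto
    then have e: "x^2 + 2 * y^2 = 2 * int p" using q by simp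
    then have "x^2 = 2 * (int p - y^2)" by (simp add: algebra_simps)
    then have "even (x^2)" by simp
    then obtain z where z: "x = 2 * z" by auto
    then have e2: "y^2 + 2 * z^2 = int p" using e by (simp add: power2_eq_square algebra_simps)
    have "y \<noteq> 0" using e2 nsq2[of z] by auto
    moreover have "z \<noteq> 0" using e2 nsq[of y] by auto
    ultimately show ?thesis using e2 k2 by (intro exI[of _ "\<bar>y\<bar>"] exI[of _ "\<bar>z\<bar>"]) simp
  qed
qed


lemma qr_minus1:
  assumes p: "prime p" "p mod 4 = 1"
  shows "\<exists>t. int p dvd t^2 + 1"
proof -
  have p2: "2 < p" using p prime_gt_1_nat[OF p(1)] by (cases "p = 2") auto
  have ec: "[Legendre (-1) (int p) = (-1) ^ ((p - 1) div 2)] (mod int p)"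
    using euler_criterion[OF p(1) p2] .
  have "even ((p - 1) div 2)" using p(2) by presburger
  then have ec1: "[Legendre (-1) (int p) = 1] (mod int p)" using ec by simp
  have nz: "\<not> [-1 = 0] (mod int p)"
  proof
    assume "[-1 = 0] (mod int p)"
    then have "int p dvd 1" by (simp add: cong_0_iff)
    then show False using p2 by simp
  qed
  have "QuadRes (int p) (-1)"
  proof (rule ccontr)
    assume "\<not> QuadRes (int p) (-1)"
    then have "Legendre (-1) (int p) = -1" using nz by (simp add: Legendre_def)
    then have "[-1 = 1] (mod int p)" using ec1 by simp
    then have "int p dvd 2" by (simp add: cong_iff_dvd_diff)
    then have "p dvd 2" by presburger
    then have "p \<le> 2" by (rule dvd_imp_le) simp
    then show False using p2 by simp
  qed
  then obtain y where "[y^2 = -1] (mod int p)" unfolding QuadRes_def by blast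
  then have "int p dvd y^2 + 1" by (simp add: cong_iff_dvd_diff)
  then show ?thesis by blast
qed

lemma card_E_gauss:
  assumes p: "prime p" "p = 8 * m + 3"
  shows "card (GAUSS.E p 2) = 2 * m + 1"
proof -
  have p2: "2 < p" using p by simp
  interpret G: GAUSS p 2
  proof
    show "prime p" by (rule p(1))
    show "2 < p" by (rule p2)
    show "[2 \<noteq> 0] (mod int p)"
    proof
      assume "[2 = 0] (mod int p)"
      then have "int p dvd 2" by (simp add: cong_0_iff)
      then have "p dvd 2" by presburger
      then have "p \<le> 2" by (rule dvd_imp_le) simp
    then show False using p2 by simp
    qed
  qed simp
  have h: "(int p - 1) div 2 = int (4 * m + 1)" using p by simp
  have C: "G.C = (\<lambda>x. x * 2) ` {0<..int (4 * m + 1)}"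
  proof -
    have "G.C = (\<lambda>x. x mod int p) ` (\<lambda>x. x * 2) ` {0<..int (4 * m + 1)}"
      unfolding G.C_def G.B_def G.A_def h ..
    also have "\<dots> = (\<lambda>x. x * 2) ` {0<..int (4 * m + 1)}"
      unfolding image_image
    proof (rule image_cong[OF refl])
      fix x assume "x \<in> {0<..int (4 * m + 1)}"
      then show "x * 2 mod int p = x * 2" using p by (intro mod_pos_pos_trivial) auto
    qed
    finally show ?thesis .
  qed
  have E: "G.E = (\<lambda>x. x * 2) ` {int (2 * m + 1)..int (4 * m + 1)}"
    unfolding G.E_def C h by (auto simp: image_iff) 
  have "card G.E = card {int (2 * m + 1)..int (4 * m + 1)}"
    unfolding E by (rule card_image) (simp add: inj_on_def)
  also have "\<dots> = 2 * m + 1" by simp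
  finally show ?thesis .
qed

lemma qr_minus2:
  assumes p: "prime p" "p mod 8 = 3"
  shows "\<exists>t. int p dvd t^2 + 2"
proof -
  obtain m where m: "p = 8 * m + 3" using p(2) by (metis div_mod_decomp mult.commute)
  have p2: "2 < p" using m by simp
  interpret G: GAUSS p 2
  proof
    show "prime p" by (rule p(1))
    show "2 < p" by (rule p2)
    show "[2 \<noteq> 0] (mod int p)"
    proof
      assume "[2 = 0] (mod int p)"
      then have "int p dvd 2" by (simp add: cong_0_iff)
      then have "p dvd 2" by presburger
      then have "p \<le> 2" by (rule dvd_imp_le) simp
      then show False using p2 by simp
    qed
  qed simp
  have h: "nat ((int p - 1) div 2) = 4 * m + 1" "(p - 1) div 2 = 4 * m + 1" using m by simp_all
  have "[2 ^ (4 * m + 1) = (-1) ^ (2 * m + 1)] (mod int p)"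
    using G.pre_gauss_lemma card_E_gauss[OF p(1) m] unfolding h by simp
  then have g: "[2 ^ (4 * m + 1) = -1] (mod int p)" by simp
  have ec: "[Legendre (-2) (int p) = (-2) ^ (4 * m + 1)] (mod int p)"
    using euler_criterion[OF p(1) p2, of "-2"] unfolding h by simp
  have "(-2::int) ^ (4 * m + 1) = - (2 ^ (4 * m + 1))"
    by (simp add: power_minus')
  then have "[(-2::int) ^ (4 * m + 1) = 1] (mod int p)"
    using g by (metis cong_minus_minus_iff minus_minus)
  then have ec1: "[Legendre (-2) (int p) = 1] (mod int p)" using ec cong_trans by blast
  have nz: "\<not> [-2 = 0] (mod int p)"
  proof
    assume "[-2 = 0] (mod int p)"
    then have "int p dvd 2" by (simp add: cong_0_iff)
    then have "p dvd 2" by presburger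
    then have "p \<le> 2" by (rule dvd_imp_le) simp
    then show False using p2 by simp
  qed
  have "QuadRes (int p) (-2)"
  proof (rule ccontr)
    assume "\<not> QuadRes (int p) (-2)"
    then have "Legendre (-2) (int p) = -1" using nz by (simp add: Legendre_def)
    then have "[-1 = 1] (mod int p)" using ec1 by simp
    then have "int p dvd 2" by (simp add: cong_iff_dvd_diff)
    then have "p dvd 2" by presburger
    then have "p \<le> 2" by (rule dvd_imp_le) simp
    then show False using p2 by simp
  qed
  then obtain y where "[y^2 = -2] (mod int p)" unfolding QuadRes_def by blast
  then have "int p dvd y^2 + 2" by (simp add: cong_iff_dvd_diff)
  then show ?thesis by blast
qed


lemma sqT: "8 * tm (Suc a) + 1 = (2 * a + 1)^2"
proof -
  have "tm a * 2 + a = a * a" by (rule tm_double)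
  then show ?thesis by (simp add: power2_eq_square algebra_simps)
qed

lemma eqv1:
  assumes "l \<ge> 1"
  shows "(4 * tm (Suc a) + 4 * tm (Suc b) = l - 1) \<longleftrightarrow> (int (2*a+1))^2 + (int (2*b+1))^2 = 2 * int l"
proof -
  have "(4 * tm (Suc a) + 4 * tm (Suc b) = l - 1) \<longleftrightarrow> (8 * tm (Suc a) + 1) + (8 * tm (Suc b) + 1) = 2 * l"
    using assms by auto
  also have "\<dots> \<longleftrightarrow> (2*a+1)^2 + (2*b+1)^2 = 2 * l" unfolding sqT ..
  also have "\<dots> \<longleftrightarrow> int ((2*a+1)^2 + (2*b+1)^2) = int (2 * l)" by (simp only: of_nat_eq_iff)
  finally show ?thesis by simp
qed

lemma eqv2:
  assumes "l \<ge> 3"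
  shows "(8 * tm (Suc a) + 16 * tm (Suc b) = l - 3) \<longleftrightarrow> (int (2*a+1))^2 + 2 * (int (2*b+1))^2 = int l"
proof -
  have "(8 * tm (Suc a) + 16 * tm (Suc b) = l - 3) \<longleftrightarrow> (8 * tm (Suc a) + 1) + 2 * (8 * tm (Suc b) + 1) = l"
    using assms by auto
  also have "\<dots> \<longleftrightarrow> (2*a+1)^2 + 2 * (2*b+1)^2 = l" unfolding sqT ..
  also have "\<dots> \<longleftrightarrow> int ((2*a+1)^2 + 2 * (2*b+1)^2) = int l" by (simp only: of_nat_eq_iff)
  finally show ?thesis by simp
qed

lemma prod_dvd:
  fixes A B C D M k :: int
  assumes "M = A^2 + k * B^2" "M = C^2 + k * D^2"
  shows "M dvd (A*D - B*C) * (A*D + B*C)"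
proof -
  have "(A*D - B*C) * (A*D + B*C) = A^2 * D^2 - B^2 * C^2" by (simp add: power2_eq_square algebra_simps)
  also have "\<dots> = (M - k * B^2) * D^2 - B^2 * (M - k * D^2)" using assms by simp
  also have "\<dots> = M * (D^2 - B^2)" by (simp add: algebra_simps)
  finally show ?thesis by simp
qed

lemma prime_dvd_factor:
  fixes A B C D M k :: int and p :: nat
  assumes "prime p" "int p dvd M" "M = A^2 + k * B^2" "M = C^2 + k * D^2"
  shows "int p dvd (A*D - B*C) \<or> int p dvd (A*D + B*C)"
proof -
  have "int p dvd (A*D - B*C) * (A*D + B*C)" using dvd_trans[OF assms(2) prod_dvd[OF assms(3,4)]] .
  moreover have "prime (int p)" using assms(1) by simp
  ultimately show ?thesis using prime_dvd_mult_iff by blast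
qed

lemma even_odd_dvd:
  fixes x :: int and l :: nat
  assumes "even x" "int l dvd x" "odd l"
  shows "2 * int l dvd x"
proof -
  obtain r where r: "x = int l * r" using assms(2) by blast
  have "even r" using assms(1,3) r by (auto simp: even_mult_iff)
  then obtain s where "r = 2 * s" by blast
  then show ?thesis using r by (simp add: mult_ac)
qed

lemma c1_val:
  assumes l: "prime l" "l mod 4 = 1"
  shows "c1 l = 2"
proof -
  have l1: "l \<ge> 1" using l prime_gt_0_nat by fastforce
  have lodd: "odd l" using l(2) by presburger
  obtain t where "int l dvd t^2 + 1" using qr_minus1[OF l] by blast
  then obtain x y :: int where xy: "0 < x" "0 < y" "x^2 + 1 * y^2 = int l"
    using rep_exists[OF l(1) lodd, of 1 t] by auto
  have "\<exists>X Y::int. 0 < Y \<and> Y < X \<and> X^2 + Y^2 = int l"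
  proof (cases "x = y")
    case True
    then have "int l = 2 * x^2" using xy by simp
    then show ?thesis using lodd by (metis even_mult_iff even_numeral even_of_nat)
  next
    case False
    then show ?thesis
    proof (cases "y < x")
      case True then show ?thesis using xy by (intro exI[of _ x] exI[of _ y]) simp
    next
      case False then show ?thesis using xy \<open>x \<noteq> y\<close> by (intro exI[of _ y] exI[of _ x]) simp
    qed
  qed
  then obtain X Y :: int where XY: "0 < Y" "Y < X" "X^2 + Y^2 = int l" by blast
  have "odd (X + Y)"
  proof
    assume "even (X + Y)"
    then obtain w where "X + Y = 2 * w" by blast
    then have hX: "X = 2 * w - Y" by simp
    have "X^2 + Y^2 = 2 * (2 * w^2 - 2 * w * Y + Y^2)" unfolding hX by (simp add: power2_eq_square algebra_simps)
    then show False using XY(3) lodd by (metis even_mult_iff even_numeral even_of_nat)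
  qed
  then obtain a0 where a0: "X + Y = 2 * a0 + 1" by (metis oddE)
  have "odd (X - Y)" using \<open>odd (X + Y)\<close> by (metis add_diff_cancel_left' diff_diff_eq2 even_add even_diff mult_2 dvd_add_right_iff)
  then obtain b0 where b0: "X - Y = 2 * b0 + 1" by (metis oddE)
  have a0p: "0 \<le> a0" "0 \<le> b0" using a0 b0 XY by linarith+
  have ab0: "a0 \<noteq> b0" using a0 b0 XY by linarith
  have rep0: "(2 * a0 + 1)^2 + (2 * b0 + 1)^2 = 2 * int l"
    unfolding a0[symmetric] b0[symmetric] XY(3)[symmetric] by (simp add: power2_eq_square algebra_simps)
  let ?S = "{p \<in> {..l} \<times> {..l}. 4 * tm (Suc (fst p)) + 4 * tm (Suc (snd p)) = l - 1}"
  have bound: "a \<le> l" if "(int (2*a+1))^2 + (int (2*b+1))^2 = 2 * int l" for a b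
  proof -
    have "int (2*a+1) \<le> (int (2*a+1))^2" by (simp add: power2_eq_square)
    moreover have "0 \<le> (int (2*b+1))^2" by simp
    ultimately have "int (2*a+1) \<le> 2 * int l" using that by linarith
    then show ?thesis by simp
  qed
  have mem: "(a, b) \<in> ?S \<longleftrightarrow> (int (2*a+1))^2 + (int (2*b+1))^2 = 2 * int l" for a b
  proof
    assume "(a, b) \<in> ?S" then show "(int (2*a+1))^2 + (int (2*b+1))^2 = 2 * int l" using eqv1[OF l1] by simp
  next
    assume h: "(int (2*a+1))^2 + (int (2*b+1))^2 = 2 * int l"
    have "a \<le> l" using bound[OF h] .
    moreover have "b \<le> l" using bound[of b a] h by (simp add: add.commute)
    ultimately show "(a, b) \<in> ?S" using h eqv1[OF l1] by simp
  qed
  let ?a = "nat a0" and ?b = "nat b0"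
  have ia: "int (2 * ?a + 1) = 2 * a0 + 1" "int (2 * ?b + 1) = 2 * b0 + 1" using a0p by simp_all
  have sub1: "?S \<subseteq> {(?a, ?b), (?b, ?a)}"
  proof
    fix p assume pS: "p \<in> ?S"
    obtain a b where p: "p = (a, b)" by fastforce
    have h: "(int (2*a+1))^2 + (int (2*b+1))^2 = 2 * int l" using mem pS p by simp
    let ?A = "int (2*a+1)" and ?B = "int (2*b+1)" and ?C = "2 * a0 + 1" and ?D = "2 * b0 + 1"
    have e1: "2 * int l = ?A^2 + 1 * ?B^2" using h by simp
    have e2: "2 * int l = ?C^2 + 1 * ?D^2" using rep0 by simp
    have d1: "int l dvd (?A * ?D - ?B * ?C) \<or> int l dvd (?A * ?D + ?B * ?C)"
      by (rule prime_dvd_factor[OF l(1) _ e1 e2]) simp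
    have ev: "even (?A * ?D - ?B * ?C)" "even (?A * ?D + ?B * ?C)" by simp_all
    have d2: "2 * int l dvd (?A * ?D - ?B * ?C) \<or> 2 * int l dvd (?A * ?D + ?B * ?C)"
      using d1 ev even_odd_dvd[OF _ _ lodd] by blast
    have "(?A = ?C \<and> ?B = ?D) \<or> (1 = (1::int) \<and> ?A = ?D \<and> ?B = ?C)"
      by (rule uniq[of ?A ?B ?C ?D 1 "2 * int l", OF _ _ _ _ _ e1 e2 d2]) (use a0p in auto)
    then have "(a = ?a \<and> b = ?b) \<or> (a = ?b \<and> b = ?a)" using a0p by auto
    then show "p \<in> {(?a, ?b), (?b, ?a)}" using p by auto
  qed
  have r1: "(int (2 * ?a + 1))^2 + (int (2 * ?b + 1))^2 = 2 * int l" unfolding ia by (rule rep0)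
  have r2: "(int (2 * ?b + 1))^2 + (int (2 * ?a + 1))^2 = 2 * int l" using r1 by (simp only: add.commute)
  have sub2: "{(?a, ?b), (?b, ?a)} \<subseteq> ?S"
    using mem[of ?a ?b] mem[of ?b ?a] r1 r2 by blast
  have "?S = {(?a, ?b), (?b, ?a)}" using sub1 sub2 by (rule subset_antisym)
  moreover have "(?a, ?b) \<noteq> (?b, ?a)" using ab0 a0p by auto
  ultimately show ?thesis unfolding c1_def by simp
qed

lemma odd_sq_T:
  fixes x :: int
  assumes "0 < x" "odd x"
  obtains a where "x = int (2 * a + 1)" "x^2 = 8 * int (tm (Suc a)) + 1"
proof -
  obtain c where c: "x = 2 * c + 1" using assms(2) by (metis oddE)
  have "0 \<le> c" using c assms(1) by linarith
  then have xa: "x = int (2 * nat c + 1)" using c by simp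
  have "x^2 = int ((2 * nat c + 1)^2)" unfolding xa by simp
  also have "\<dots> = int (8 * tm (Suc (nat c)) + 1)" unfolding sqT ..
  finally have e: "x^2 = 8 * int (tm (Suc (nat c))) + 1" by (simp del: tm.simps)
  show ?thesis using that[OF xa e] .
qed

lemma c2_val:
  assumes l: "prime l" "l mod 8 = 3"
  shows "c2 l = 1"
proof -
  have l3: "l \<ge> 3" using l prime_ge_2_nat[OF l(1)] by presburger
  have lodd: "odd l" using l(2) by presburger
  obtain t where "int l dvd t^2 + 2" using qr_minus2[OF l] by blast
  then obtain x y :: int where xy: "0 < x" "0 < y" "x^2 + 2 * y^2 = int l"
    using rep_exists[OF l(1) lodd, of 2 t] by auto
  have "odd x"
  proof
    assume "even x"
    then have "even (x^2 + 2 * y^2)" by simp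
    then show False using xy(3) lodd by simp
  qed
  then obtain a0 where a0: "x = int (2 * a0 + 1)" "x^2 = 8 * int (tm (Suc a0)) + 1"
    using odd_sq_T[OF xy(1)] by blast
  have "odd y"
  proof
    assume "even y"
    then obtain w where "y = 2 * w" by blast
    then have "int l = 8 * (int (tm (Suc a0)) + w^2) + 1" using xy(3) a0(2) by (simp add: power2_eq_square algebra_simps del: tm.simps)
    then obtain K where "int l = 8 * K + 1" by blast
    then have "int l mod 8 = 1" by presburger
    then have "l mod 8 = 1" by presburger
    then show False using l(2) by simp
  qed
  then obtain b0 where b0: "y = int (2 * b0 + 1)" "y^2 = 8 * int (tm (Suc b0)) + 1"
    using odd_sq_T[OF xy(2)] by blast
  let ?S = "{p \<in> {..l} \<times> {..l}. 8 * tm (Suc (fst p)) + 16 * tm (Suc (snd p)) = l - 3}"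
  have bound: "a \<le> l" "b \<le> l" if "(int (2*a+1))^2 + 2 * (int (2*b+1))^2 = int l" for a b
  proof -
    have "int (2*a+1) \<le> (int (2*a+1))^2" by (simp add: power2_eq_square)
    moreover have "int (2*b+1) \<le> (int (2*b+1))^2" by (simp add: power2_eq_square)
    moreover have "0 \<le> (int (2*b+1))^2" "0 \<le> (int (2*a+1))^2" by simp_all
    ultimately have "int (2*a+1) \<le> int l" "int (2*b+1) \<le> int l" using that by linarith+
    then show "a \<le> l" "b \<le> l" by simp_all
  qed
  have mem: "(a, b) \<in> ?S \<longleftrightarrow> (int (2*a+1))^2 + 2 * (int (2*b+1))^2 = int l" for a b
    using eqv2[OF l3, of a b] bound[of a b] by auto
  have rep0: "(int (2*a0+1))^2 + 2 * (int (2*b0+1))^2 = int l" using xy(3) a0(1) b0(1) by simp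
  have sub1: "?S \<subseteq> {(a0, b0)}"
  proof
    fix p assume pS: "p \<in> ?S"
    obtain a b where p: "p = (a, b)" by fastforce
    have h: "(int (2*a+1))^2 + 2 * (int (2*b+1))^2 = int l" using mem pS p by simp
    let ?A = "int (2*a+1)" and ?B = "int (2*b+1)" and ?C = "int (2*a0+1)" and ?D = "int (2*b0+1)"
    have e1: "int l = ?A^2 + 2 * ?B^2" using h by simp
    have e2: "int l = ?C^2 + 2 * ?D^2" using rep0 by simp
    have d1: "int l dvd (?A * ?D - ?B * ?C) \<or> int l dvd (?A * ?D + ?B * ?C)"
      by (rule prime_dvd_factor[OF l(1) _ e1 e2]) simp
    have "(?A = ?C \<and> ?B = ?D) \<or> (2 = (1::int) \<and> ?A = ?D \<and> ?B = ?C)"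
      by (rule uniq[of ?A ?B ?C ?D 2 "int l", OF _ _ _ _ _ e1 e2 d1]) auto
    then have "a = a0 \<and> b = b0" by simp
    then show "p \<in> {(a0, b0)}" using p by simp
  qed
  have sub2: "{(a0, b0)} \<subseteq> ?S" using mem[of a0 b0] rep0 by blast
  have "?S = {(a0, b0)}" using sub1 sub2 by (rule subset_antisym)
  then show ?thesis unfolding c2_def by simp
qed

lemma c1_zero:
  assumes "l \<ge> 1" "l mod 4 \<noteq> 1"
  shows "c1 l = 0"
proof -
  have "\<not> (4 * X + 4 * Y = l - 1)" for X Y :: nat using assms by presburger
  then show ?thesis unfolding c1_def by (simp del: tm.simps)
qed

lemma c2_zero:
  assumes "l \<ge> 3" "l mod 8 \<noteq> 3"
  shows "c2 l = 0"
proof -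
  have "\<not> (8 * X + 16 * Y = l - 3)" for X Y :: nat using assms by presburger
  then show ?thesis unfolding c2_def by (simp del: tm.simps)
qed

theorem proposition3p1:
  fixes l :: nat
  assumes "prime l"
  shows "(l mod 8 \<in> {1, 3, 5} \<longrightarrow> [fps_nth f_form l = 2] (mod 4)) \<and>
         (l mod 8 \<in> {2, 7} \<longrightarrow> [fps_nth f_form l = 0] (mod 4))"
proof -
  have l2: "l \<ge> 2" using prime_ge_2_nat[OF assms] .
  have key: "[fps_nth f_form l = int (c1 l) + 2 * (if l < 3 then 0 else int (c2 l))] (mod 4)"
    by (rule f_nth_cong) (use l2 in simp)
  have c15: "[fps_nth f_form l = 2] (mod 4)" if "l mod 8 = 1 \<or> l mod 8 = 5"
  proof -
    have "l mod 4 = 1" using that by presburger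
    then have "c1 l = 2" using c1_val[OF assms] by simp
    moreover have "\<not> l < 3" using that l2 by presburger
    moreover have "c2 l = 0"
    proof (rule c2_zero)
      show "3 \<le> l" "l mod 8 \<noteq> 3" using that l2 by presburger+
    qed
    ultimately show ?thesis using key by simp
  qed
  have c3: "[fps_nth f_form l = 2] (mod 4)" if "l mod 8 = 3"
  proof -
    have "c1 l = 0"
    proof (rule c1_zero)
      show "1 \<le> l" "l mod 4 \<noteq> 1" using that l2 by presburger+
    qed
    moreover have "\<not> l < 3" using that l2 by presburger
    moreover have "c2 l = 1" using c2_val[OF assms that] .
    ultimately show ?thesis using key by simp
  qed
  have c7: "[fps_nth f_form l = 0] (mod 4)" if "l mod 8 = 7"
  proof -
    have "c1 l = 0"
    proof (rule c1_zero)
      show "1 \<le> l" "l mod 4 \<noteq> 1" using that l2 by presburger+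
    qed
    moreover have "\<not> l < 3" using that l2 by presburger
    moreover have "c2 l = 0"
    proof (rule c2_zero)
      show "3 \<le> l" "l mod 8 \<noteq> 3" using that l2 by presburger+
    qed
    ultimately show ?thesis using key by simp
  qed
  have c2: "[fps_nth f_form l = 0] (mod 4)" if "l mod 8 = 2"
  proof -
    have "even l" using that by presburger
    have "l = 2"
    proof (rule ccontr)
      assume "l \<noteq> 2"
      then have "2 < l" using l2 by simp
      then have "odd l" using prime_odd_nat[OF assms] by blast
      then show False using \<open>even l\<close> by simp
    qed
    then have "c1 l = 0" using c1_zero by simp
    then show ?thesis using key \<open>l = 2\<close> by simp
  qed
  show ?thesis using c15 c3 c7 c2 by auto
qed

end
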